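(* For $n\ge 3$, the family $\mathcal{F}=\{\emptyset\}\cup\{\{i\}:i\in[n]\}\cup\{\{i,j\}: i,j\in[n], i\ne j\}\cup\{\{1,2,\dots,i\}: 3\le i\le n\}$ is induced-$\bowtie$-saturated in $\mathcal{B}_n$; hence $\mathrm{isat}(n,\bowtie)\le\binom{n}{2}+2n-1$.
   Context: $\mathcal{B}_n$ denotes the Boolean lattice $(2^{[n]},\subseteq)$. A family $\mathcal{F}\subseteq 2^{[n]}$ (ordered by inclusion) is induced-$\mathcal{P}$-saturated if it contains no induced copy of $\mathcal{P}$ (an injection $f$ with $u\le v\iff f(u)\subseteq f(v)$) but every family $\mathcal{F}'$ with $\mathcal{F}\subsetneq\mathcal{F}'\subseteq 2^{[n]}$ contains one. $\mathrm{isat}(n,\mathcal{P})$ is the minimum size of such a family. The butterfly $\bowtie$ is the four-element poset on $\{A,B,C,D\}$ whose only strict relations are $A<B$, $A<D$, $C<B$, $C<D$. *)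

theory Defs
  imports Main
begin

definition induced_copy :: "'p set \<Rightarrow> ('p \<Rightarrow> 'p \<Rightarrow> bool) \<Rightarrow> 'a set set \<Rightarrow> bool" where
  "induced_copy P le F \<longleftrightarrow>
     (\<exists>f. inj_on f P \<and> f ` P \<subseteq> F \<and> (\<forall>u\<in>P. \<forall>v\<in>P. le u v \<longleftrightarrow> f u \<subseteq> f v))"

text \<open>The Boolean lattice B_n is the power set of [n] = {1..n}.\<close>

definition induced_saturated ::
    "nat \<Rightarrow> 'p set \<Rightarrow> ('p \<Rightarrow> 'p \<Rightarrow> bool) \<Rightarrow> nat set set \<Rightarrow> bool" where
  "induced_saturated n P le F \<longleftrightarrow>
     F \<subseteq> Pow {1..n} \<and> \<not> induced_copy P le F \<and>
     (\<forall>F'. F \<subset> F' \<and> F' \<subseteq> Pow {1..n} \<longrightarrow> induced_copy P le F')"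

definition isat :: "nat \<Rightarrow> 'p set \<Rightarrow> ('p \<Rightarrow> 'p \<Rightarrow> bool) \<Rightarrow> nat" where
  "isat n P le = Inf {card F | F. induced_saturated n P le F}"

datatype bfly = bA | bB | bC | bD

definition bfly_le :: "bfly \<Rightarrow> bfly \<Rightarrow> bool" where
  "bfly_le u v \<longleftrightarrow> u = v \<or> (u \<in> {bA, bC} \<and> v \<in> {bB, bD})"

end

theory Submission
  imports Defs
begin

lemma bfly_antisym: "bfly_le u v \<Longrightarrow> bfly_le v u \<Longrightarrow> u = v"
  by (cases u; cases v) (auto simp: bfly_le_def)

lemma pair_eq:
  assumes "x \<in> B" "y \<in> B" "x \<noteq> y" "finite B" "card B \<le> 2"
  shows "B = {x, y}"
proof -
  have "{x,y} \<subseteq> B" using assms by auto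
  moreover have "card {x,y} = 2" using assms by auto
  ultimately show ?thesis using assms card_seteq[of B "{x,y}"] by simp
qed

lemma no_bfly:
  assumes F: "\<And>X. X \<in> F \<Longrightarrow> (\<exists>i::nat. X = {1..i}) \<or> (finite X \<and> card X \<le> 2)"
  shows "\<not> induced_copy (UNIV :: bfly set) bfly_le F"
proof
  assume "induced_copy (UNIV :: bfly set) bfly_le F"
  from this[unfolded induced_copy_def] obtain f where
    f: "inj_on f UNIV \<and> f ` UNIV \<subseteq> F \<and> (\<forall>u\<in>UNIV. \<forall>v\<in>UNIV. bfly_le u v = (f u \<subseteq> f v))" ..
  have inF: "range f \<subseteq> F" using f by simp
  have iff: "\<And>u v. bfly_le u v \<longleftrightarrow> f u \<subseteq> f v" using f by simp
  define A where "A = f bA"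
  define B where "B = f bB"
  define C where "C = f bC"
  define D where "D = f bD"
  have r: "A \<subseteq> B" "A \<subseteq> D" "C \<subseteq> B" "C \<subseteq> D" "\<not> A \<subseteq> C" "\<not> C \<subseteq> A"
      "\<not> B \<subseteq> D" "\<not> D \<subseteq> B"
    unfolding A_def B_def C_def D_def
    using iff[of bA bB] iff[of bA bD] iff[of bC bB] iff[of bC bD] iff[of bA bC] iff[of bC bA]
      iff[of bB bD] iff[of bD bB]
    by (simp_all add: bfly_le_def)
  obtain x where x: "x \<in> A" "x \<notin> C" using r by blast
  obtain y where y: "y \<in> C" "y \<notin> A" using r by blast
  have BF: "B \<in> F" "D \<in> F" using inF B_def D_def by auto
  have cB: "\<exists>i::nat. B = {1..i}"
  proof (rule ccontr)
    assume "\<nexists>i. B = {1..i}"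
    then have "finite B" "card B \<le> 2" using F BF by blast+
    then have "B = {x,y}" using pair_eq[of x B y] x y r by blast
    then show False using r x y by blast
  qed
  have cD: "\<exists>i::nat. D = {1..i}"
  proof (rule ccontr)
    assume "\<nexists>i. D = {1..i}"
    then have "finite D" "card D \<le> 2" using F BF by blast+
    then have "D = {x,y}" using pair_eq[of x D y] x y r by blast
    then show False using r x y by blast
  qed
  obtain i k where "B = {1..i}" "D = {1..k}" using cB cD by blast
  then show False using r by (cases "i \<le> k") auto
qed

lemma add_bfly:
  fixes S :: "nat set" and n :: nat
  assumes S: "S \<subseteq> {1..n}" "3 \<le> card S" and nc: "\<And>i. S \<noteq> {1..i}"
  shows "\<exists>a c. a \<in> S \<and> c \<in> S \<and> a \<noteq> c \<and> (\<exists>k. 3 \<le> k \<and> k \<le> n \<and> a \<in> {1..k} \<and> c \<in> {1..k}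
       \<and> \<not> S \<subseteq> {1..k} \<and> \<not> {1..k} \<subseteq> S)"
proof -
  have fin: "finite S" using S finite_subset by blast
  have ne: "S \<noteq> {}" using S by auto
  define m where "m = Max S"
  have mS: "m \<in> S" using fin ne m_def by auto
  have le: "\<And>x. x \<in> S \<Longrightarrow> 1 \<le> x \<and> x \<le> m" using fin m_def S by auto
  have "\<not> {1..m} \<subseteq> S"
  proof
    assume "{1..m} \<subseteq> S"
    then have "S = {1..m}" using le by fastforce
    then show False using nc by blast
  qed
  then obtain j where j: "j \<in> {1..m}" "j \<notin> S" by blast
  have jm: "j \<le> m - 1" using j mS by (cases "j = m") auto
  have sub: "S \<subseteq> {1..m} - {j}" using le j by auto
  have "card S \<le> card ({1..m} - {j})" using sub card_mono by blast
  also have "\<dots> = m - 1" using j by auto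
  finally have m4: "3 \<le> m - 1" using S by linarith
  have "card (S - {m}) \<ge> 2" using S mS fin by auto
  then obtain T where "T \<subseteq> S - {m}" "card T = 2"
    by (meson obtain_subset_with_card_n)
  then obtain a c where ac: "a \<in> S - {m}" "c \<in> S - {m}" "a \<noteq> c"
    by (auto simp: card_2_iff)
  have "a \<in> {1..m-1}" "c \<in> {1..m-1}" using ac le by fastforce+
  moreover have "\<not> S \<subseteq> {1..m-1}" using mS le ne m4 by auto
  moreover have "\<not> {1..m-1} \<subseteq> S" using j jm by auto
  moreover have "m - 1 \<le> n" using mS S(1) by force
  ultimately show ?thesis using ac m4 by blast
qed

theorem proposition2p3:
  fixes n :: nat
  assumes "n \<ge> 3"
  defines "F \<equiv> {{}} \<union> {{i} | i. i \<in> {1..n}}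
                 \<union> {{i, j} | i j. i \<in> {1..n} \<and> j \<in> {1..n} \<and> i \<noteq> j}
                 \<union> {{1..i} | i. 3 \<le> i \<and> i \<le> n}"
  shows "induced_saturated n (UNIV :: bfly set) bfly_le F
         \<and> isat n (UNIV :: bfly set) bfly_le \<le> (n choose 2) + 2 * n - 1"
proof -
  have FP: "F \<subseteq> Pow {1..n}" unfolding F_def by auto
  have memE: "{} \<in> F" unfolding F_def by blast
  have memS: "\<And>i. i \<in> {1..n} \<Longrightarrow> {i} \<in> F" unfolding F_def by blast
  have memP: "\<And>i j. i \<in> {1..n} \<Longrightarrow> j \<in> {1..n} \<Longrightarrow> i \<noteq> j \<Longrightarrow> {i,j} \<in> F"
    unfolding F_def by blast
  have memC: "\<And>i. 3 \<le> i \<Longrightarrow> i \<le> n \<Longrightarrow> {1..i} \<in> F" unfolding F_def by blast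
  have nb: "\<not> induced_copy (UNIV :: bfly set) bfly_le F"
  proof (rule no_bfly)
    fix X assume "X \<in> F"
    then have "X = {} \<or> (\<exists>i. X = {i}) \<or> (\<exists>i j. X = {i,j}) \<or> (\<exists>i. X = {1..i})"
      unfolding F_def by blast
    then show "(\<exists>i::nat. X = {1..i}) \<or> (finite X \<and> card X \<le> 2)"
    proof (elim disjE exE)
      fix i j assume "X = {i,j}" then show ?thesis by (simp add: card_insert_if)
    qed auto
  qed
  have sat: "\<forall>F'. F \<subset> F' \<and> F' \<subseteq> Pow {1..n} \<longrightarrow> induced_copy (UNIV :: bfly set) bfly_le F'"
  proof (intro allI impI)
    fix F' assume H: "F \<subset> F' \<and> F' \<subseteq> Pow {1..n}"
    then obtain S where S: "S \<in> F'" "S \<notin> F" "S \<subseteq> {1..n}" by blast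
    have fin: "finite S" using S finite_subset by blast
    have c3: "3 \<le> card S"
    proof (rule ccontr)
      assume "\<not> 3 \<le> card S"
      then have "card S = 0 \<or> card S = 1 \<or> card S = 2" by linarith
      then show False
      proof (elim disjE)
        assume "card S = 0" then have "S = {}" using fin by auto
        then show False using S memE by simp
      next
        assume "card S = 1" then obtain i where "S = {i}" by (auto simp: card_1_singleton_iff)
        then show False using S memS by simp
      next
        assume "card S = 2" then obtain i j where "S = {i,j}" "i \<noteq> j" by (auto simp: card_2_iff)
        then show False using S memP by simp
      qed
    qed
    have nc: "\<And>i. S \<noteq> {1..i}"
    proof
      fix i assume "S = {1..i}"
      then have "card S = i" by simp
      then have "3 \<le> i" "i \<le> n" using c3 S \<open>S = {1..i}\<close> by auto
      then show False using S \<open>S = {1..i}\<close> memC by simp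
    qed
    obtain a c k where ac: "a \<in> S" "c \<in> S" "a \<noteq> c" "3 \<le> k" "k \<le> n" "a \<in> {1..k}" "c \<in> {1..k}"
      "\<not> S \<subseteq> {1..k}" "\<not> {1..k} \<subseteq> S"
      using add_bfly[OF S(3) c3 nc] by blast
    define f where "f = (\<lambda>x. case x of bA \<Rightarrow> {a} | bB \<Rightarrow> S | bC \<Rightarrow> {c} | bD \<Rightarrow> {1..k})"
    have a1: "a \<in> {1..n}" "c \<in> {1..n}" using ac S by auto
    have rng: "range f \<subseteq> F'"
    proof -
      have "{a} \<in> F" "{c} \<in> F" "{1..k} \<in> F" using a1 ac memS memC by auto
      then show ?thesis using H S unfolding f_def by (auto split: bfly.splits)
    qed
    have iff: "\<forall>u v. bfly_le u v \<longleftrightarrow> f u \<subseteq> f v"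
    proof (intro allI)
      fix u v
      have n1: "\<not> S \<subseteq> {a}" "\<not> S \<subseteq> {c}" "\<not> {1..k} \<subseteq> {a}" "\<not> {1..k} \<subseteq> {c}"
        using ac by auto
      show "bfly_le u v \<longleftrightarrow> f u \<subseteq> f v"
        by (cases u; cases v) (use ac n1 in \<open>auto simp: bfly_le_def f_def\<close>)
    qed
    have "inj_on f UNIV"
      by (rule inj_onI) (metis iff bfly_antisym order_refl)
    then show "induced_copy (UNIV :: bfly set) bfly_le F'"
      unfolding induced_copy_def using rng iff by (intro exI[of _ f] conjI) auto
  qed
  have IS: "induced_saturated n (UNIV :: bfly set) bfly_le F"
    unfolding induced_saturated_def using FP nb sat by blast
  have P2: "{{i, j} | i j. i \<in> {1..n} \<and> j \<in> {1..n} \<and> i \<noteq> j} = {T. T \<subseteq> {1..n} \<and> card T = 2}"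
  proof (intro equalityI subsetI)
    fix T assume "T \<in> {{i, j} | i j. i \<in> {1..n} \<and> j \<in> {1..n} \<and> i \<noteq> j}"
    then show "T \<in> {T. T \<subseteq> {1..n} \<and> card T = 2}" by auto
  next
    fix T assume "T \<in> {T. T \<subseteq> {1..n} \<and> card T = 2}"
    then obtain i j where "T = {i,j}" "i \<noteq> j" "T \<subseteq> {1..n}" by (auto simp: card_2_iff)
    then show "T \<in> {{i, j} | i j. i \<in> {1..n} \<and> j \<in> {1..n} \<and> i \<noteq> j}" by blast
  qed
  have c2: "card {{i, j} | i j. i \<in> {1..n} \<and> j \<in> {1..n} \<and> i \<noteq> j} = n choose 2"
    unfolding P2 by (simp add: n_subsets)
  have c1: "card {{i} | i. i \<in> {1..n}} \<le> n"
  proof -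
    have "{{i} | i. i \<in> {1..n}} = (\<lambda>i. {i}) ` {1..n}" by auto
    then show ?thesis using card_image_le[of "{1..n}" "\<lambda>i. {i}"] by simp
  qed
  have c3: "card {{1..i} | i. 3 \<le> i \<and> i \<le> n} \<le> n - 2"
  proof -
    have "{{1..i} | i. 3 \<le> i \<and> i \<le> n} = (\<lambda>i. {1..i}) ` {3..n}" by auto
    then show ?thesis using card_image_le[of "{3..n}" "\<lambda>i. {1..i}"] by simp
  qed
  have "card F \<le> card ({{}} \<union> {{i} | i. i \<in> {1..n}}
                 \<union> {{i, j} | i j. i \<in> {1..n} \<and> j \<in> {1..n} \<and> i \<noteq> j})
                 + card {{1..i} | i. 3 \<le> i \<and> i \<le> n}"
    unfolding F_def by (rule card_Un_le)
  also have "\<dots> \<le> card ({{}} \<union> {{i} | i. i \<in> {1..n}})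
                 + card {{i, j} | i j. i \<in> {1..n} \<and> j \<in> {1..n} \<and> i \<noteq> j}
                 + card {{1..i} | i. 3 \<le> i \<and> i \<le> n}"
    by (intro add_le_mono1 card_Un_le)
  also have "\<dots> \<le> (card {{}::nat set} + card {{i} | i. i \<in> {1..n}})
                 + card {{i, j} | i j. i \<in> {1..n} \<and> j \<in> {1..n} \<and> i \<noteq> j}
                 + card {{1..i} | i. 3 \<le> i \<and> i \<le> n}"
    by (intro add_le_mono1 card_Un_le)
  also have "\<dots> \<le> (1 + n) + (n choose 2) + (n - 2)" using c1 c2 c3 by simp
  also have "\<dots> = (n choose 2) + 2 * n - 1" using assms by simp
  finally have cF: "card F \<le> (n choose 2) + 2 * n - 1" .
  have "isat n (UNIV :: bfly set) bfly_le \<le> card F"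
    unfolding isat_def using IS by (intro cInf_lower) auto
  then show ?thesis using IS cF by linarith
qed

end
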